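(* For any quantile vector $\mathbf{q}=(q_1\ge\dots\ge q_N)$ with $q_i\in(0,1)$, with $\pi$ uniformly random from $\Pi_{n,m,c}$, $\mathbb{E}_\pi[\mathrm{OPT}(\mathbf{q},\pi)-\mathrm{STR}(\mathbf{q},\pi)\mid\mathcal{E}_2]\le\mathbb{E}_{i,j}[b(q_i)-s(q_j)]$, where $i$ is uniform on $I_1$ and $j$ is uniform on $J_1$, independently.
   Context: Setting: distributions $F_B,F_S$ with quantile functions $b(q)=\inf\{x:\Pr_{b\sim F_B}[b\le x]\ge q\}$, $s(q)=\inf\{x:\Pr_{s\sim F_S}[s\le x]\ge q\}$, and $b(q)\ge s(q)$ for all $q\in(0,1)$. Integers $m\ge n\ge 20$ and $c\ge1$; $N=m+n+2c$. $\Pi_{n,m,c}$ is the set of maps $\pi:[N]\to\{\mathrm{BO},\mathrm{BN},\mathrm{SO},\mathrm{SN}\}$ with $m$, $c$, $n$, $c$ preimages respectively of $\mathrm{BO},\mathrm{BN},\mathrm{SO},\mathrm{SN}$; write $B_{\mathrm{Old}}^\pi,B_{\mathrm{New}}^\pi,S_{\mathrm{Old}}^\pi,S_{\mathrm{New}}^\pi$ for these preimages. Index $i$ labeled as buyer gives a buyer with value $b(q_i)$, labeled as seller gives a seller with value $s(q_i)$; the original market consists of old buyers and old sellers, the augmented market of all agents. $\mathrm{OPT}(\mathbf{q},\pi)$ is the first-best gains from trade in the original market; $\mathrm{STR}(\mathbf{q},\pi)$ is the gains from trade of Seller Trade Reduction in the augmented market. (First best: with buyer values $b^{(1)}\ge\dots$,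 seller values $s^{(1)}\le\dots$, $r=\max\{i: b^{(i)}\ge s^{(i)}\}$ ($0$ if none), trade top $r$ buyers with bottom $r$ sellers, gains $\sum_{i\le r}(b^{(i)}-s^{(i)})$. STR: with $s^{(k)}=\infty$ beyond the number of sellers, if $b^{(r)}\ge s^{(r+1)}$ trade $r$ pairs, else only the top $r-1$ buyers with bottom $r-1$ sellers.) Let $p=\lceil n/10\rceil$, $I_1=\{1,\dots,p\}$, $I_2=\{p+1,\dots,2p\}$, $J_1=\{N-p+1,\dots,N\}$, $J_2=\{N-2p+1,\dots,N-p\}$. $\mathcal{E}_1$ is the set of $\pi$ with $|I_1\cap B_{\mathrm{New}}^\pi|\ge2$, $|I_2\cap B_{\mathrm{Old}}^\pi|\ge1$, $|J_1\cap S_{\mathrm{New}}^\pi|\ge2$, $|J_2\cap S_{\mathrm{Old}}^\pi|\ge1$. $\mathcal{E}_2=\{\pi:\pi\notin\mathcal{E}_1,\ S_{\mathrm{New}}^\pi\subseteq\{1,\dots,2n+2c\}\}$ (assumed nonempty so the conditioning is defined). *)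

theory Defs
  imports "HOL-Probability.Probability" "HOL-Library.FuncSet"
begin

datatype agent = BO | BN | SO | SN

definition quantile :: "real measure \<Rightarrow> real \<Rightarrow> real" where
  "quantile M u = Inf {x. cdf M x \<ge> u}"

text \<open>Labelings with m old buyers, c new buyers, n old sellers, c new sellers on {1..N}.\<close>
definition Pi_nmc :: "nat \<Rightarrow> nat \<Rightarrow> nat \<Rightarrow> (nat \<Rightarrow> agent) set" where
  "Pi_nmc n m c = {\<pi> \<in> {1..m+n+2*c} \<rightarrow>\<^sub>E UNIV.
      card {i\<in>{1..m+n+2*c}. \<pi> i = BO} = m \<and> card {i\<in>{1..m+n+2*c}. \<pi> i = BN} = c \<and>
      card {i\<in>{1..m+n+2*c}. \<pi> i = SO} = n \<and> card {i\<in>{1..m+n+2*c}. \<pi> i = SN} = c}"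

definition vals :: "(real \<Rightarrow> real) \<Rightarrow> (nat \<Rightarrow> real) \<Rightarrow> (nat \<Rightarrow> agent) \<Rightarrow> nat \<Rightarrow> agent set \<Rightarrow> real list" where
  "vals f q \<pi> N L = map (\<lambda>i. f (q i)) (filter (\<lambda>i. \<pi> i \<in> L) [1..<N+1])"

text \<open>Buyer values sorted decreasingly (b^(1) >= ...), seller values increasingly; 1-indexed.\<close>
definition bord :: "real list \<Rightarrow> nat \<Rightarrow> real" where
  "bord B i = rev (sort B) ! (i - 1)"
definition sord :: "real list \<Rightarrow> nat \<Rightarrow> real" where
  "sord S i = sort S ! (i - 1)"

definition trade_r :: "real list \<Rightarrow> real list \<Rightarrow> nat" where
  "trade_r B S = Max ({0} \<union> {i. 1 \<le> i \<and> i \<le> length B \<and> i \<le> length S \<and> bord B i \<ge> sord S i})"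

definition gft :: "real list \<Rightarrow> real list \<Rightarrow> nat \<Rightarrow> real" where
  "gft B S k = (\<Sum>i=1..k. bord B i - sord S i)"

definition first_best :: "real list \<Rightarrow> real list \<Rightarrow> real" where
  "first_best B S = gft B S (trade_r B S)"

text \<open>Seller Trade Reduction: s^(r+1) = infinity if r+1 exceeds the number of sellers.\<close>
definition str_gft :: "real list \<Rightarrow> real list \<Rightarrow> real" where
  "str_gft B S = (let r = trade_r B S in
     gft B S (if 1 \<le> r \<and> r + 1 \<le> length S \<and> bord B r \<ge> sord S (r + 1) then r else r - 1))"

definition OPT_fb :: "(real \<Rightarrow> real) \<Rightarrow> (real \<Rightarrow> real) \<Rightarrow> (nat \<Rightarrow> real) \<Rightarrow> (nat \<Rightarrow> agent) \<Rightarrow> nat \<Rightarrow> real" where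
  "OPT_fb b s q \<pi> N = first_best (vals b q \<pi> N {BO}) (vals s q \<pi> N {SO})"

definition STR_mech :: "(real \<Rightarrow> real) \<Rightarrow> (real \<Rightarrow> real) \<Rightarrow> (nat \<Rightarrow> real) \<Rightarrow> (nat \<Rightarrow> agent) \<Rightarrow> nat \<Rightarrow> real" where
  "STR_mech b s q \<pi> N = str_gft (vals b q \<pi> N {BO, BN}) (vals s q \<pi> N {SO, SN})"

definition E1 :: "nat \<Rightarrow> nat \<Rightarrow> nat \<Rightarrow> (nat \<Rightarrow> agent) set" where
  "E1 n m c = (let N = m+n+2*c; p = nat \<lceil>real n / 10\<rceil> in
     {\<pi> \<in> Pi_nmc n m c.
        card ({1..p} \<inter> {i. \<pi> i = BN}) \<ge> 2 \<and> card ({p+1..2*p} \<inter> {i. \<pi> i = BO}) \<ge> 1 \<and>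
        card ({N-p+1..N} \<inter> {i. \<pi> i = SN}) \<ge> 2 \<and> card ({N-2*p+1..N-p} \<inter> {i. \<pi> i = SO}) \<ge> 1})"

definition E2 :: "nat \<Rightarrow> nat \<Rightarrow> nat \<Rightarrow> (nat \<Rightarrow> agent) set" where
  "E2 n m c = {\<pi> \<in> Pi_nmc n m c. \<pi> \<notin> E1 n m c \<and>
      {i\<in>{1..m+n+2*c}. \<pi> i = SN} \<subseteq> {1..2*n+2*c}}"

end

theory Submission
  imports Defs
begin

lemma quantile_mono:
  assumes M: "real_distribution M" and u: "0 < u" "u \<le> v" "v < 1"
  shows "quantile M u \<le> quantile M v"
proof -
  interpret real_distribution M by fact
  have fb: "finite_borel_measure M" by (rule finite_borel_measure_M)
  have "eventually (\<lambda>x. cdf M x > v) at_top"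
    using order_tendstoD(1)[OF cdf_lim_at_top_prob u(3)] .
  then obtain x0 where "cdf M x0 > v" by (auto simp: eventually_at_top_linorder)
  hence ne: "{x. cdf M x \<ge> v} \<noteq> {}" by (metis (mono_tags) empty_iff less_imp_le mem_Collect_eq)
  have "eventually (\<lambda>x. cdf M x < u) at_bot"
    using order_tendstoD(2)[OF finite_borel_measure.cdf_lim_at_bot[OF fb] u(1)] .
  then obtain y0 where y0: "\<And>x. x \<le> y0 \<Longrightarrow> cdf M x < u" by (auto simp: eventually_at_bot_linorder)
  have bdd: "bdd_below {x. cdf M x \<ge> u}"
  proof (rule bdd_belowI)
    fix x assume "x \<in> {x. cdf M x \<ge> u}"
    then show "y0 \<le> x" using y0[of x] by force
  qed
  have sub: "{x. cdf M x \<ge> v} \<subseteq> {x. cdf M x \<ge> u}" using u by auto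
  show ?thesis unfolding quantile_def by (rule cInf_superset_mono[OF ne bdd sub])
qed

lemma sw_nth_ge:
  assumes "sorted_wrt (<) (xs::nat list)" "i \<le> j" "j < length xs"
  shows "xs!i + (j - i) \<le> xs!j"
  using assms(2,3)
proof (induction j)
  case 0 then show ?case by simp
next
  case (Suc j)
  show ?case
  proof (cases "i \<le> j")
    case True
    have "xs!i + (j - i) \<le> xs!j" using Suc True by simp
    moreover have "xs!j < xs!(Suc j)" using sorted_wrt_nth_less[OF assms(1)] Suc by simp
    ultimately show ?thesis using True by simp
  next
    case False then have "i = Suc j" using Suc by simp
    then show ?thesis by simp
  qed
qed

lemma sw_lower:
  assumes "sorted_wrt (<) (xs::nat list)" "set xs \<subseteq> {1..N}" "j < length xs"
  shows "j + 1 \<le> xs!j"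
proof -
  have "xs!0 + (j - 0) \<le> xs!j" using sw_nth_ge[OF assms(1), of 0 j] assms(3) by simp
  moreover have "xs!0 \<in> set xs" using assms(3) by (intro nth_mem) auto
  hence "1 \<le> xs!0" using assms(2) by auto
  ultimately show ?thesis by simp
qed

lemma sw_upper:
  assumes "sorted_wrt (<) (xs::nat list)" "set xs \<subseteq> {1..N}" "j < length xs"
  shows "xs!j + (length xs - 1 - j) \<le> N"
proof -
  have "xs!j + (length xs - 1 - j) \<le> xs!(length xs - 1)"
    using sw_nth_ge[OF assms(1), of j "length xs - 1"] assms(3) by simp
  moreover have "xs!(length xs - 1) \<in> set xs" using assms(3) by (intro nth_mem) auto
  hence "xs!(length xs - 1) \<le> N" using assms(2) by auto
  ultimately show ?thesis by simp
qed

lemma filter_nth_ge: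
  "sorted (xs::'a::linorder list) \<Longrightarrow> j < length (filter P xs) \<Longrightarrow> xs!j \<le> filter P xs ! j"
proof (induction xs arbitrary: j)
  case Nil then show ?case by simp
next
  case (Cons x xs)
  show ?case
  proof (cases "P x")
    case True
    then show ?thesis using Cons by (cases j) auto
  next
    case False
    have lt: "j < length (filter P xs)" using Cons.prems False by simp
    have ih: "xs!j \<le> filter P xs ! j" using Cons False lt by simp
    have lx: "j < length xs" using lt length_filter_le[of P xs] by linarith
    have "(x#xs)!j \<le> xs!j"
    proof (cases j)
      case 0 then show ?thesis using Cons.prems(1) lx by (auto simp: sorted_iff_nth_mono)
    next
      case (Suc j') then show ?thesis using Cons.prems(1) lx
        by (simp add: sorted_iff_nth_mono)
    qed
    then show ?thesis using ih False by simp
  qed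
qed

lemma filter_nth_le_desc:
  "sorted_wrt (\<ge>) (xs::'a::linorder list) \<Longrightarrow> j < length (filter P xs) \<Longrightarrow> filter P xs ! j \<le> xs!j"
proof (induction xs arbitrary: j)
  case Nil then show ?case by simp
next
  case (Cons x xs)
  show ?case
  proof (cases "P x")
    case True
    then show ?thesis using Cons by (cases j) auto
  next
    case False
    have lt: "j < length (filter P xs)" using Cons.prems False by simp
    have ih: "filter P xs ! j \<le> xs!j" using Cons False lt by simp
    have lx: "j < length xs" using lt length_filter_le[of P xs] by linarith
    have "xs!j \<le> (x#xs)!j"
    proof (cases j)
      case 0 then show ?thesis using Cons.prems(1) lx by (auto simp: nth_mem)
    next
      case (Suc j') then show ?thesis using Cons.prems(1) lx sorted_wrt_nth_less
        by (metis Suc_lessD lessI nth_Cons_Suc sorted_wrt.simps(2) sorted_wrt_iff_nth_less)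
    qed
    then show ?thesis using ih False by simp
  qed
qed

lemma take_card:
  assumes "sorted_wrt (<) (xs::nat list)" "j < length xs"
  shows "card {x\<in>set xs. x < xs!j} \<le> j"
proof -
  have "{x\<in>set xs. x < xs!j} \<subseteq> set (take j xs)"
  proof
    fix x assume "x \<in> {x\<in>set xs. x < xs!j}"
    then obtain i where i: "i < length xs" "x = xs!i" "xs!i < xs!j" by (auto simp: in_set_conv_nth)
    have "i < j"
    proof (rule ccontr)
      assume "\<not> i < j"
      hence "xs!j + (i - j) \<le> xs!i" using sw_nth_ge[OF assms(1), of j i] i by simp
      then show False using i by simp
    qed
    then show "x \<in> set (take j xs)" using i by (auto simp: in_set_conv_nth)
  qed
  hence "card {x\<in>set xs. x < xs!j} \<le> card (set (take j xs))" by (simp add: card_mono)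
  also have "\<dots> \<le> length (take j xs)" by (rule card_length)
  finally show ?thesis using assms by simp
qed

lemma sort_map_anti:
  assumes "sorted_wrt (<) (xs::nat list)" "\<And>x y. x \<in> set xs \<Longrightarrow> y \<in> set xs \<Longrightarrow> x \<le> y \<Longrightarrow> g y \<le> (g x::real)"
  shows "sort (map g xs) = rev (map g xs)"
proof (rule properties_for_sort)
  show "mset (rev (map g xs)) = mset (map g xs)" by simp
  have "sorted_wrt (\<lambda>x y. g y \<le> g x) xs"
    using sorted_wrt_mono_rel[OF _ assms(1), of "\<lambda>x y. g y \<le> g x"] assms(2) by auto
  then show "sorted (rev (map g xs))" by (simp add: sorted_wrt_rev sorted_wrt_map)
qed

lemma bord_map:
  assumes "sorted_wrt (<) (xs::nat list)" "\<And>x y. x \<in> set xs \<Longrightarrow> y \<in> set xs \<Longrightarrow> x \<le> y \<Longrightarrow> g y \<le> (g x::real)"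
    "1 \<le> k" "k \<le> length xs"
  shows "bord (map g xs) k = g (xs!(k-1))"
  using assms by (simp add: bord_def sort_map_anti)

lemma sord_map:
  assumes "sorted_wrt (<) (xs::nat list)" "\<And>x y. x \<in> set xs \<Longrightarrow> y \<in> set xs \<Longrightarrow> x \<le> y \<Longrightarrow> g y \<le> (g x::real)"
    "1 \<le> k" "k \<le> length xs"
  shows "sord (map g xs) k = g (xs!(length xs - k))"
  using assms by (simp add: sord_def sort_map_anti rev_nth)

lemma bord_anti:
  assumes "1 \<le> i" "i \<le> j" "j \<le> length B"
  shows "bord B j \<le> bord B i"
proof -
  have "bord B i = sort B ! (length B - i)" using assms by (simp add: bord_def rev_nth)
  moreover have "bord B j = sort B ! (length B - j)" using assms by (simp add: bord_def rev_nth)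
  ultimately show ?thesis using assms by (simp add: sorted_nth_mono)
qed

lemma sord_mono:
  assumes "1 \<le> i" "i \<le> j" "j \<le> length S"
  shows "sord S i \<le> sord S j"
  using assms by (simp add: sord_def sorted_nth_mono)

lemma trade_r_fin: "finite ({0} \<union> {i. 1 \<le> i \<and> i \<le> length B \<and> i \<le> length S \<and> bord B i \<ge> sord S i})"
  by (rule finite_subset[of _ "{..length B}"]) auto

lemma trade_r_len: "trade_r B S \<le> length B \<and> trade_r B S \<le> length S"
proof -
  have "trade_r B S \<in> {0} \<union> {i. 1 \<le> i \<and> i \<le> length B \<and> i \<le> length S \<and> bord B i \<ge> sord S i}"
    unfolding trade_r_def by (rule Max_in[OF trade_r_fin]) simp
  then show ?thesis by auto
qed

lemma trade_r_at:
  assumes "1 \<le> trade_r B S" shows "sord S (trade_r B S) \<le> bord B (trade_r B S)"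
proof -
  have "trade_r B S \<in> {0} \<union> {i. 1 \<le> i \<and> i \<le> length B \<and> i \<le> length S \<and> bord B i \<ge> sord S i}"
    unfolding trade_r_def by (rule Max_in[OF trade_r_fin]) simp
  then show ?thesis using assms by auto
qed

lemma trade_r_max:
  assumes "1 \<le> i" "i \<le> length B" "i \<le> length S" "sord S i \<le> bord B i"
  shows "i \<le> trade_r B S"
  unfolding trade_r_def by (rule Max_ge[OF trade_r_fin]) (use assms in auto)

lemma trade_r_below:
  assumes "1 \<le> i" "i \<le> trade_r B S"
  shows "sord S i \<le> bord B i"
proof -
  have "sord S i \<le> sord S (trade_r B S)" using sord_mono assms trade_r_len by blast
  also have "\<dots> \<le> bord B (trade_r B S)" using trade_r_at assms by simp
  also have "\<dots> \<le> bord B i" using bord_anti assms trade_r_len by blast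
  finally show ?thesis .
qed

lemma gft_Suc: "gft B S (Suc k) = gft B S k + (bord B (Suc k) - sord S (Suc k))"
  by (simp add: gft_def)

lemma gft_mono_r:
  assumes "k \<le> trade_r B S" "j \<le> k"
  shows "gft B S j \<le> gft B S k"
  using assms
proof (induction k)
  case 0 then show ?case by simp
next
  case (Suc k)
  show ?case
  proof (cases "j \<le> k")
    case True
    then have "gft B S j \<le> gft B S k" using Suc by simp
    moreover have "sord S (Suc k) \<le> bord B (Suc k)" using trade_r_below Suc.prems by simp
    ultimately show ?thesis by (simp add: gft_Suc)
  next
    case False then have "j = Suc k" using Suc by simp
    then show ?thesis by simp
  qed
qed

lemma loss_abs:
  assumes lB: "length B \<le> length B'" and lS: "length S \<le> length S'"
    and dB: "\<And>k. 1 \<le> k \<Longrightarrow> k \<le> length B \<Longrightarrow> bord B k \<le> bord B' k"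
    and dS: "\<And>k. 1 \<le> k \<Longrightarrow> k \<le> length S \<Longrightarrow> sord S' k \<le> sord S k"
  shows "first_best B S - str_gft B' S' \<le>
     (if 1 \<le> trade_r B' S' \<and> \<not> (trade_r B' S' + 1 \<le> length S' \<and> sord S' (trade_r B' S' + 1) \<le> bord B' (trade_r B' S'))
      then bord B' (trade_r B' S') - sord S' (trade_r B' S') else 0)"
proof -
  define ro where "ro = trade_r B S"
  define r where "r = trade_r B' S'"
  have roB: "ro \<le> length B" "ro \<le> length S" using trade_r_len ro_def by auto
  have ror: "ro \<le> r"
  proof (cases "ro = 0")
    case False
    have "sord S' ro \<le> sord S ro" using dS roB False by simp
    also have "\<dots> \<le> bord B ro" using trade_r_at False ro_def by simp
    also have "\<dots> \<le> bord B' ro" using dB roB False by simp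
    finally show ?thesis unfolding r_def using trade_r_max False roB lB lS by simp
  qed simp
  have "first_best B S = gft B S ro" by (simp add: first_best_def ro_def)
  also have "\<dots> \<le> gft B' S' ro" unfolding gft_def
    by (rule sum_mono) (use dB dS roB in \<open>auto intro: diff_mono\<close>)
  also have "\<dots> \<le> gft B' S' r" using gft_mono_r[of r B' S' ro] ror r_def by simp
  finally have fb: "first_best B S \<le> gft B' S' r" .
  show ?thesis
  proof (cases "1 \<le> r \<and> r + 1 \<le> length S' \<and> bord B' r \<ge> sord S' (r + 1)")
    case True
    then have "str_gft B' S' = gft B' S' r" by (simp add: str_gft_def r_def Let_def)
    then show ?thesis using fb True r_def by auto
  next
    case False
    then have st: "str_gft B' S' = gft B' S' (r - 1)" unfolding str_gft_def r_def Let_def by (simp only: if_False)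
    show ?thesis
    proof (cases "r = 0")
      case True then show ?thesis using fb st r_def by simp
    next
      case r0: False
      have "gft B' S' r = gft B' S' (r-1) + (bord B' r - sord S' r)"
        using gft_Suc[of B' S' "r-1"] r0 by simp
      then show ?thesis using fb st False r0 r_def by auto
    qed
  qed
qed

definition posl :: "(nat \<Rightarrow> agent) \<Rightarrow> nat \<Rightarrow> agent set \<Rightarrow> nat list" where
  "posl \<pi> N L = filter (\<lambda>i. \<pi> i \<in> L) [1..<N+1]"

lemma vals_posl: "vals f q \<pi> N L = map (\<lambda>i. f (q i)) (posl \<pi> N L)"
  by (simp add: vals_def posl_def)

lemma posl_sw: "sorted_wrt (<) (posl \<pi> N L)"
  unfolding posl_def by (rule sorted_wrt_filter) (rule sorted_wrt_upt)

lemma posl_set: "set (posl \<pi> N L) = {i\<in>{1..N}. \<pi> i \<in> L}"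
  unfolding posl_def by auto

lemma posl_sub: "set (posl \<pi> N L) \<subseteq> {1..N}"
  unfolding posl_set by auto

lemma posl_len: "length (posl \<pi> N L) = card {i\<in>{1..N}. \<pi> i \<in> L}"
proof -
  have "distinct (posl \<pi> N L)" unfolding posl_def by simp
  then show ?thesis using distinct_card posl_set by metis
qed

lemma posl_filter: "L \<subseteq> L' \<Longrightarrow> posl \<pi> N L = filter (\<lambda>i. \<pi> i \<in> L) (posl \<pi> N L')"
  unfolding posl_def by (auto simp: filter_filter intro: filter_cong)

lemma card_two:
  assumes "a \<noteq> a'"
  shows "card {i\<in>{1..N::nat}. \<pi> i \<in> {a,a'}} = card {i\<in>{1..N}. \<pi> i = a} + card {i\<in>{1..N}. \<pi> i = a'}"
proof -
  have "{i\<in>{1..N}. \<pi> i \<in> {a,a'}} = {i\<in>{1..N}. \<pi> i = a} \<union> {i\<in>{1..N}. \<pi> i = a'}" by auto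
  moreover have "{i\<in>{1..N}. \<pi> i = a} \<inter> {i\<in>{1..N}. \<pi> i = a'} = {}" using assms by auto
  ultimately show ?thesis by (simp add: card_Un_disjoint)
qed

lemma sw_sorted: "sorted_wrt (<) (xs::nat list) \<Longrightarrow> sorted xs"
  by (simp add: sorted_wrt_mono_rel[of _ "(<)" "(\<le>)"])

lemma sw_rev_desc: "sorted_wrt (<) (xs::nat list) \<Longrightarrow> sorted_wrt (\<ge>) (rev xs)"
  by (simp add: sorted_wrt_rev sorted_wrt_mono_rel[of _ "(<)" "(\<le>)"])

lemma pointwise:
  fixes b s q :: "real \<Rightarrow> real" and qq :: "nat \<Rightarrow> real"
  defines "bq \<equiv> \<lambda>i. b (qq i)" and "sq \<equiv> \<lambda>i. s (qq i)"
  assumes ab: "\<And>i j. i \<in> {1..N} \<Longrightarrow> j \<in> {1..N} \<Longrightarrow> i \<le> j \<Longrightarrow> bq j \<le> bq i"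
    and as: "\<And>i j. i \<in> {1..N} \<Longrightarrow> j \<in> {1..N} \<Longrightarrow> i \<le> j \<Longrightarrow> sq j \<le> sq i"
    and dom: "\<And>i. i \<in> {1..N} \<Longrightarrow> sq i \<le> bq i"
    and pi: "\<pi> \<in> Pi_nmc n m c" and N: "N = m + n + 2*c"
    and p1: "1 \<le> p" and p2: "2*p \<le> n + c + 1" and nm: "n \<le> m"
  shows "OPT_fb b s qq \<pi> N - STR_mech b s qq \<pi> N \<le>
     (bq p - sq (N-p+1)) + (if card {i\<in>{1..n+c-p+1}. \<pi> i \<in> {BO,BN}} \<le> p - 2 then sq (N-p+1) - sq N else 0)"
proof -
  define xB where "xB = posl \<pi> N {BO}"
  define xB' where "xB' = posl \<pi> N {BO,BN}"
  define xS where "xS = posl \<pi> N {SO}"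
  define xS' where "xS' = posl \<pi> N {SO,SN}"
  have cards: "card {i\<in>{1..N}. \<pi> i = BO} = m" "card {i\<in>{1..N}. \<pi> i = BN} = c"
     "card {i\<in>{1..N}. \<pi> i = SO} = n" "card {i\<in>{1..N}. \<pi> i = SN} = c"
    using pi N by (auto simp: Pi_nmc_def)
  have lB: "length xB = m" unfolding xB_def posl_len using cards by simp
  have lS: "length xS = n" unfolding xS_def posl_len using cards by simp
  have lB': "length xB' = m + c" unfolding xB'_def posl_len using cards card_two[of BO BN N \<pi>] by simp
  have lS': "length xS' = n + c" unfolding xS'_def posl_len using cards card_two[of SO SN N \<pi>] by simp
  have sw: "sorted_wrt (<) xB" "sorted_wrt (<) xB'" "sorted_wrt (<) xS" "sorted_wrt (<) xS'"
    unfolding xB_def xB'_def xS_def xS'_def by (rule posl_sw)+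
  have sub: "set xB \<subseteq> {1..N}" "set xB' \<subseteq> {1..N}" "set xS \<subseteq> {1..N}" "set xS' \<subseteq> {1..N}"
    unfolding xB_def xB'_def xS_def xS'_def by (rule posl_sub)+
  have fB: "xB = filter (\<lambda>i. \<pi> i \<in> {BO}) xB'" unfolding xB_def xB'_def by (rule posl_filter) auto
  have fS: "xS = filter (\<lambda>i. \<pi> i \<in> {SO}) xS'" unfolding xS_def xS'_def by (rule posl_filter) auto
  define B where "B = vals b qq \<pi> N {BO}"
  define B' where "B' = vals b qq \<pi> N {BO,BN}"
  define S where "S = vals s qq \<pi> N {SO}"
  define S' where "S' = vals s qq \<pi> N {SO,SN}"
  have Beq: "B = map bq xB" "B' = map bq xB'" "S = map sq xS" "S' = map sq xS'"
    unfolding B_def B'_def S_def S'_def xB_def xB'_def xS_def xS'_def vals_posl bq_def sq_def by simp_all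
  have antiB: "\<And>xs x y. set xs \<subseteq> {1..N} \<Longrightarrow> x \<in> set xs \<Longrightarrow> y \<in> set xs \<Longrightarrow> x \<le> y \<Longrightarrow> bq y \<le> bq x"
    using ab by blast
  have antiS: "\<And>xs x y. set xs \<subseteq> {1..N} \<Longrightarrow> x \<in> set xs \<Longrightarrow> y \<in> set xs \<Longrightarrow> x \<le> y \<Longrightarrow> sq y \<le> sq x"
    using as by blast
  have bordB: "\<And>k. 1 \<le> k \<Longrightarrow> k \<le> m \<Longrightarrow> bord B k = bq (xB!(k-1))"
    unfolding Beq using bord_map[OF sw(1)] antiB[OF sub(1)] lB by simp
  have bordB': "\<And>k. 1 \<le> k \<Longrightarrow> k \<le> m+c \<Longrightarrow> bord B' k = bq (xB'!(k-1))"
    unfolding Beq using bord_map[OF sw(2)] antiB[OF sub(2)] lB' by simp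
  have sordS: "\<And>k. 1 \<le> k \<Longrightarrow> k \<le> n \<Longrightarrow> sord S k = sq (xS!(n-k))"
    unfolding Beq using sord_map[OF sw(3)] antiS[OF sub(3)] lS by simp
  have sordS': "\<And>k. 1 \<le> k \<Longrightarrow> k \<le> n+c \<Longrightarrow> sord S' k = sq (xS'!(n+c-k))"
    unfolding Beq using sord_map[OF sw(4)] antiS[OF sub(4)] lS' by simp
  have lens: "length B = m" "length B' = m+c" "length S = n" "length S' = n+c"
    using Beq lB lB' lS lS' by simp_all
  have inN: "\<And>xs j. set xs \<subseteq> {1..N} \<Longrightarrow> j < length xs \<Longrightarrow> xs!j \<in> {1..N}"
    using nth_mem by blast
  have dB: "bord B k \<le> bord B' k" if k: "1 \<le> k" "k \<le> length B" for k
  proof -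
    have "xB'!(k-1) \<le> xB!(k-1)"
      using filter_nth_ge[OF sw_sorted[OF sw(2)], of "k-1"] fB k lB lens by simp
    moreover have "xB!(k-1) \<in> {1..N}" "xB'!(k-1) \<in> {1..N}" using inN sub k lens lB lB' by auto
    ultimately have "bq (xB!(k-1)) \<le> bq (xB'!(k-1))" using ab by blast
    then show ?thesis using bordB bordB' k lens by simp
  qed
  have dS: "sord S' k \<le> sord S k" if k: "1 \<le> k" "k \<le> length S" for k
  proof -
    have rf: "rev xS = filter (\<lambda>i. \<pi> i \<in> {SO}) (rev xS')" using fS by (simp add: rev_filter)
    have kl: "k-1 < length (filter (\<lambda>i. \<pi> i \<in> {SO}) (rev xS'))"
      using arg_cong[OF rf, of length] k lS lens by simp
    have "rev xS ! (k-1) \<le> rev xS' ! (k-1)"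
      using filter_nth_le_desc[OF sw_rev_desc[OF sw(4)] kl] rf by simp
    moreover have "rev xS ! (k-1) = xS ! (n - k)" using k lS lens by (simp add: rev_nth)
    moreover have "rev xS' ! (k-1) = xS' ! (n + c - k)" using k lS' lens by (simp add: rev_nth)
    ultimately have le: "xS!(n-k) \<le> xS'!(n+c-k)" by simp
    moreover have "xS!(n-k) \<in> {1..N}" "xS'!(n+c-k) \<in> {1..N}" using inN sub k lens lS lS' by auto
    ultimately have "sq (xS'!(n+c-k)) \<le> sq (xS!(n-k))" using as by blast
    then show ?thesis using sordS sordS' k lens by simp
  qed
  have loss: "first_best B S - str_gft B' S' \<le>
     (if 1 \<le> trade_r B' S' \<and> \<not> (trade_r B' S' + 1 \<le> length S' \<and> sord S' (trade_r B' S' + 1) \<le> bord B' (trade_r B' S'))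
      then bord B' (trade_r B' S') - sord S' (trade_r B' S') else 0)"
    by (rule loss_abs) (use lens dB dS in auto)
  have lhs: "OPT_fb b s qq \<pi> N - STR_mech b s qq \<pi> N = first_best B S - str_gft B' S'"
    by (simp add: OPT_fb_def STR_mech_def B_def B'_def S_def S'_def)
  have pN: "p \<in> {1..N}" "N - p + 1 \<in> {1..N}" "N \<in> {1..N}" "p \<le> N - p + 1" using p1 p2 N nm by auto
  have base0: "0 \<le> bq p - sq (N-p+1)"
    using ab[OF pN(1) pN(2) pN(4)] dom[OF pN(2)] by simp
  have ext0: "0 \<le> (if card {i\<in>{1..n+c-p+1}. \<pi> i \<in> {BO,BN}} \<le> p - 2 then sq (N-p+1) - sq N else 0)"
    using as[OF pN(2) pN(3)] pN by auto
  define r where "r = trade_r B' S'"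
  have rl: "r \<le> m + c" "r \<le> n + c" using trade_r_len lens r_def by metis+
  show ?thesis
  proof (cases "1 \<le> r \<and> \<not> (r + 1 \<le> length S' \<and> sord S' (r + 1) \<le> bord B' r)")
    case False
    then have "first_best B S - str_gft B' S' \<le> 0" using loss unfolding r_def by (auto split: if_splits)
    then show ?thesis using lhs base0 ext0 by linarith
  next
    case True
    define \<beta> where "\<beta> = xB'!(r-1)"
    define \<sigma> where "\<sigma> = xS'!(n+c-r)"
    have r1: "1 \<le> r" using True by simp
    have l1: "first_best B S - str_gft B' S' \<le> bq \<beta> - sq \<sigma>"
    proof -
      have "first_best B S - str_gft B' S' \<le> bord B' r - sord S' r"
        using loss True unfolding r_def by (auto split: if_splits)
      moreover have "bord B' r = bq \<beta>" using bordB' rl r1 \<beta>_def by simp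
      moreover have "sord S' r = sq \<sigma>" using sordS' rl r1 \<sigma>_def by simp
      ultimately show ?thesis by simp
    qed
    have \<beta>N: "\<beta> \<in> {1..N}" using inN[OF sub(2)] rl r1 lB' \<beta>_def by simp
    have \<sigma>N: "\<sigma> \<in> {1..N}" using inN[OF sub(4)] rl r1 lS' \<sigma>_def by simp
    have \<beta>r: "r \<le> \<beta>" using sw_lower[OF sw(2) sub(2), of "r-1"] rl r1 lB' \<beta>_def by simp
    have \<sigma>up: "\<sigma> + r \<le> N + 1"
    proof -
      have "n+c-r < length xS'" using r1 rl lS' by simp
      from sw_upper[OF sw(4) sub(4) this] show ?thesis using r1 rl lS' \<sigma>_def by simp
    qed
    have red2: "n + c - r < \<beta>" if c2: "r + 1 \<le> n + c"
    proof -
      define \<sigma>' where "\<sigma>' = xS'!(n+c-r-1)"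
      have "\<not> sord S' (r + 1) \<le> bord B' r" using True c2 lens by simp
      moreover have "sord S' (r + 1) = sq \<sigma>'" using sordS'[of "r+1"] c2 \<sigma>'_def by simp
      moreover have "bord B' r = bq \<beta>" using bordB' rl r1 \<beta>_def by simp
      ultimately have lt: "bq \<beta> < sq \<sigma>'" by simp
      have i1: "n+c-r-1 < length xS'" using c2 lS' by simp
      have \<sigma>'N: "\<sigma>' \<in> {1..N}" using inN[OF sub(4) i1] \<sigma>'_def by simp
      have "sq \<sigma>' \<le> bq \<sigma>'" using dom \<sigma>'N by simp
      hence "bq \<beta> < bq \<sigma>'" using lt by simp
      hence "\<sigma>' < \<beta>" using ab[OF \<beta>N \<sigma>'N] by (meson linorder_not_le not_le)
      moreover have "n+c-r-1 + 1 \<le> \<sigma>'" using sw_lower[OF sw(4) sub(4) i1] \<sigma>'_def by simp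
      ultimately show ?thesis using c2 by simp
    qed
    have \<beta>p: "p \<le> \<beta>"
    proof (cases "r + 1 \<le> n + c")
      case True
      then show ?thesis using red2 \<beta>r p2 by simp
    next
      case False
      then show ?thesis using \<beta>r rl p1 p2 by simp
    qed
    have bb: "bq \<beta> \<le> bq p" using ab[OF pN(1) \<beta>N \<beta>p] .
    show ?thesis
    proof (cases "\<sigma> \<le> N - p + 1")
      case True
      have "sq (N-p+1) \<le> sq \<sigma>" using as[OF \<sigma>N pN(2) True] .
      then show ?thesis using l1 lhs bb ext0 by linarith
    next
      case False
      have rp: "r < p" using False \<sigma>up pN by simp
      have c2: "r + 1 \<le> n + c" using rp p2 by simp
      have lt: "n + c - r < \<beta>" using red2[OF c2] .
      have il: "r - 1 < length xB'" using rl r1 lB' by simp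
      have "{i\<in>{1..n+c-p+1}. \<pi> i \<in> {BO,BN}} \<subseteq> {x\<in>set xB'. x < xB'!(r-1)}"
      proof
        fix i assume i: "i \<in> {i\<in>{1..n+c-p+1}. \<pi> i \<in> {BO,BN}}"
        have "i \<le> N" using i N p1 p2 by auto
        hence "i \<in> set xB'" using i unfolding xB'_def posl_set by auto
        moreover have "i < xB'!(r-1)" using i lt rp p2 \<beta>_def by auto
        ultimately show "i \<in> {x\<in>set xB'. x < xB'!(r-1)}" by simp
      qed
      hence "card {i\<in>{1..n+c-p+1}. \<pi> i \<in> {BO,BN}} \<le> card {x\<in>set xB'. x < xB'!(r-1)}"
        by (intro card_mono) auto
      also have "\<dots> \<le> r - 1" using take_card[OF sw(2) il] .
      finally have cd: "card {i\<in>{1..n+c-p+1}. \<pi> i \<in> {BO,BN}} \<le> p - 2" using rp r1 by simp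
      have "sq N \<le> sq \<sigma>" using as[OF \<sigma>N pN(3)] \<sigma>N by simp
      then show ?thesis using l1 lhs bb cd by simp
    qed
  qed
qed

lemma inv_maps:
  assumes inv: "\<And>i. \<tau> (\<tau> i) = i" and fx: "\<And>i. i \<notin> M \<Longrightarrow> \<tau> i = i"
  shows "(\<tau> i \<in> M) = (i \<in> M)"
  using inv fx by metis

lemma card_comp_inv:
  assumes inv: "\<And>i. \<tau> (\<tau> i) = i" and fx: "\<And>i. i \<notin> M \<Longrightarrow> \<tau> i = i" and MN: "M \<subseteq> {1..N}"
  shows "card {i\<in>{1..N}. \<pi> (\<tau> i) = a} = card {i\<in>{1..(N::nat)}. \<pi> i = a}"
proof -
  have pres: "(\<tau> i \<in> {1..N}) = (i \<in> {1..N})" for i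
    using inv_maps[of \<tau> M i, OF inv fx] fx[of i] MN by (cases "i \<in> M") auto
  have "{i\<in>{1..N}. \<pi> (\<tau> i) = a} = \<tau> ` {i\<in>{1..N}. \<pi> i = a}"
  proof
    show "{i\<in>{1..N}. \<pi> (\<tau> i) = a} \<subseteq> \<tau> ` {i\<in>{1..N}. \<pi> i = a}"
    proof
      fix i assume i: "i \<in> {i\<in>{1..N}. \<pi> (\<tau> i) = a}"
      then have "\<tau> i \<in> {i\<in>{1..N}. \<pi> i = a}" using pres by auto
      then show "i \<in> \<tau> ` {i\<in>{1..N}. \<pi> i = a}" using inv[of i] by (metis imageI)
    qed
  next
    show "\<tau> ` {i\<in>{1..N}. \<pi> i = a} \<subseteq> {i\<in>{1..N}. \<pi> (\<tau> i) = a}"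
      using pres inv by auto
  qed
  moreover have "inj \<tau>" by (metis inv injI)
  ultimately show ?thesis by (simp add: card_image inj_on_subset)
qed

lemma E2_inv:
  fixes n m c :: nat
  defines "N \<equiv> m + n + 2 * c" and "p \<equiv> nat \<lceil>real n / 10\<rceil>"
  assumes inv: "\<And>i. \<tau> (\<tau> i) = i" and fx: "\<And>i. i \<notin> M \<Longrightarrow> \<tau> i = i"
    and M1: "M \<subseteq> {2*p+1..2*n+2*c}" and M2: "M \<subseteq> {..N - 2*p}" and MN: "M \<subseteq> {1..N}"
    and pi: "\<pi> \<in> E2 n m c"
  shows "\<pi> \<circ> \<tau> \<in> E2 n m c"
proof -
  have piP: "\<pi> \<in> Pi_nmc n m c" using pi by (simp add: E2_def)
  have pres: "(\<tau> i \<in> {1..N}) = (i \<in> {1..N})" for i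
    using inv_maps[of \<tau> M i, OF inv fx] fx[of i] MN by (cases "i \<in> M") auto
  have cc: "card {i\<in>{1..N}. (\<pi> \<circ> \<tau>) i = a} = card {i\<in>{1..N}. \<pi> i = a}" for a
    using card_comp_inv[OF inv fx MN] by simp
  have ext: "\<pi> \<circ> \<tau> \<in> {1..N} \<rightarrow>\<^sub>E UNIV"
  proof -
    have "\<pi> \<in> {1..N} \<rightarrow>\<^sub>E UNIV" using piP by (simp add: Pi_nmc_def N_def)
    moreover have "\<tau> x = x" if "x \<notin> {1..N}" for x using that fx MN by blast
    ultimately show ?thesis by (auto simp: PiE_def extensional_def)
  qed
  have P: "\<pi> \<circ> \<tau> \<in> Pi_nmc n m c"
    using piP ext cc unfolding Pi_nmc_def N_def by simp
  have out: "\<tau> i = i" if "i \<le> 2*p \<or> N - 2*p < i" for i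
  proof -
    have "i \<notin> M"
    proof
      assume "i \<in> M"
      then have "2*p+1 \<le> i" "i \<le> N - 2*p" using M1 M2 by auto
      then show False using that by linarith
    qed
    then show ?thesis using fx by simp
  qed
  have s1: "{1..p} \<inter> {i. (\<pi>\<circ>\<tau>) i = BN} = {1..p} \<inter> {i. \<pi> i = BN}" using out by auto
  have s2: "{p+1..2*p} \<inter> {i. (\<pi>\<circ>\<tau>) i = BO} = {p+1..2*p} \<inter> {i. \<pi> i = BO}" using out by auto
  have out3: "\<tau> i = i" if "N-2*p+1 \<le> i" for i using out[of i] that by linarith
  have s3: "{N-p+1..N} \<inter> {i. (\<pi>\<circ>\<tau>) i = SN} = {N-p+1..N} \<inter> {i. \<pi> i = SN}"
  proof -
    have "\<tau> i = i" if "N-p+1 \<le> i" for i using out3[of i] that by linarith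
    then show ?thesis by auto
  qed
  have s4: "{N-2*p+1..N-p} \<inter> {i. (\<pi>\<circ>\<tau>) i = SO} = {N-2*p+1..N-p} \<inter> {i. \<pi> i = SO}" using out3 by auto
  have notE1: "\<pi> \<circ> \<tau> \<notin> E1 n m c"
  proof -
    have "\<pi> \<notin> E1 n m c" using pi by (simp add: E2_def)
    then show ?thesis using P piP s1 s2 s3 s4 unfolding E1_def Let_def N_def p_def by simp
  qed
  have sn: "{i\<in>{1..N}. (\<pi>\<circ>\<tau>) i = SN} \<subseteq> {1..2*n+2*c}"
  proof
    fix i assume i: "i \<in> {i\<in>{1..N}. (\<pi>\<circ>\<tau>) i = SN}"
    show "i \<in> {1..2*n+2*c}"
    proof (cases "i \<in> M")
      case True then show ?thesis using M1 i by auto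
    next
      case False
      then have "\<pi> i = SN" using i fx by simp
      moreover have "{i\<in>{1..N}. \<pi> i = SN} \<subseteq> {1..2*n+2*c}" using pi by (simp add: E2_def N_def)
      ultimately show ?thesis using i by auto
    qed
  qed
  show ?thesis using P notE1 sn unfolding E2_def N_def by simp
qed

lemma pow_aux0: "(x + 2) * 2^(2*x+2) \<le> (3::nat)^(2*x+2)"
proof (induction x)
  case 0 then show ?case by simp
next
  case (Suc x)
  have "(Suc x + 2) * 2^(2*Suc x+2) = 4 * ((x+3) * 2^(2*x+2))" by (simp add: power_add algebra_simps)
  also have "\<dots> \<le> 9 * ((x+2) * 2^(2*x+2))" by (intro mult_right_mono[of "4*(x+3)" "9*(x+2)", simplified mult.assoc]) auto
  also have "\<dots> \<le> 9 * 3^(2*x+2)" using Suc by simp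
  also have "\<dots> = 3^(2*Suc x+2)" by (simp add: power_add)
  finally show ?case .
qed

lemma pow_aux: "(J + x + 2) * 2^(4*J+2*x+2) \<le> (3::nat)^(3*J+2*x+2)"
proof (induction J)
  case 0 then show ?case using pow_aux0 by simp
next
  case (Suc J)
  have "(Suc J + x + 2) * 2^(4*Suc J+2*x+2) = 16 * ((J+x+3) * 2^(4*J+2*x+2))" by (simp add: power_add algebra_simps)
  also have "\<dots> \<le> 27 * ((J+x+2) * 2^(4*J+2*x+2))" by (intro mult_right_mono[of "16*(J+x+3)" "27*(J+x+2)", simplified mult.assoc]) auto
  also have "\<dots> \<le> 27 * 3^(3*J+2*x+2)" using Suc by simp
  also have "\<dots> = 3^(3*Suc J+2*x+2)" by (simp add: power_add)
  finally show ?case .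
qed

lemma pow_aux2:
  assumes "4*J+2*x+2 \<le> k"
  shows "(J + x + 2) * 2^k \<le> (3::nat)^(k - J)"
proof -
  obtain t where t: "k = 4*J+2*x+2 + t" using assms le_Suc_ex by blast
  have "(J + x + 2) * 2^k = ((J+x+2) * 2^(4*J+2*x+2)) * 2^t" unfolding t power_add by (simp add: algebra_simps)
  also have "\<dots> \<le> 3^(3*J+2*x+2) * 3^t" using pow_aux by (intro mult_mono power_mono) auto
  also have "\<dots> = 3^(k-J)" by (simp add: t power_add[symmetric])
  finally show ?thesis .
qed

lemma binom_tail:
  assumes "J \<le> k"
  shows "3^(k-J) * (\<Sum>j\<le>J. k choose j) \<le> (4::nat)^k"
proof -
  have "3^(k-J) * (\<Sum>j\<le>J. k choose j) = (\<Sum>j\<le>J. (k choose j) * 3^(k-J))"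
    using sum_distrib_right[of "\<lambda>j. k choose j" "{..J}" "3^(k-J)"] by (simp add: mult.commute)
  also have "\<dots> \<le> (\<Sum>j\<le>J. (k choose j) * 3^(k-j))"
    by (intro sum_mono mult_left_mono power_increasing) auto
  also have "\<dots> \<le> (\<Sum>j\<le>k. (k choose j) * 3^(k-j))"
    by (intro sum_mono2) (use assms in auto)
  also have "\<dots> = (1 + 3)^k" using binomial_ring[of "1::nat" 3 k] by simp
  finally show ?thesis by simp
qed

lemma binom_bound:
  assumes "4*J+2*x+2 \<le> k"
  shows "(J+x+2) * (\<Sum>j\<le>J. k choose j) \<le> 2^k"
proof -
  have Jk: "J \<le> k" using assms by simp
  have "3^(k-J) * ((J+x+2) * (\<Sum>j\<le>J. k choose j)) = (J+x+2) * (3^(k-J) * (\<Sum>j\<le>J. k choose j))" by (simp only: mult_ac)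
  also have "\<dots> \<le> (J+x+2) * 4^k" using binom_tail[OF Jk] by (intro mult_left_mono) auto
  also have "\<dots> = ((J+x+2) * 2^k) * 2^k"
  proof -
    have "(4::nat)^k = 2^k * 2^k" by (simp add: power_mult_distrib[symmetric])
    then show ?thesis by (simp only: mult_ac)
  qed
  also have "\<dots> \<le> 3^(k-J) * 2^k" using pow_aux2[OF assms] by simp
  finally show ?thesis by simp
qed

lemma card_small_subsets:
  assumes "finite Y"
  shows "card {U. U \<subseteq> Y \<and> card U \<le> J} = (\<Sum>j\<le>J. card Y choose j)"
proof -
  have eq: "{U. U \<subseteq> Y \<and> card U \<le> J} = (\<Union>j\<in>{..J}. {U. U \<subseteq> Y \<and> card U = j})" by auto
  have "card (\<Union>j\<in>{..J}. {U. U \<subseteq> Y \<and> card U = j}) = (\<Sum>j\<le>J. card {U. U \<subseteq> Y \<and> card U = j})"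
    by (rule card_UN_disjoint) (use assms in \<open>auto intro: finite_subset[of _ "Pow Y"]\<close>)
  then show ?thesis using eq n_subsets[OF assms] by simp
qed

lemma card_subsets_inter:
  assumes "finite A" "Y \<subseteq> A"
  shows "card {S. S \<subseteq> A \<and> card (S \<inter> Y) \<le> J} = card {U. U \<subseteq> Y \<and> card U \<le> J} * 2^(card A - card Y)"
proof -
  have "bij_betw (\<lambda>S. (S \<inter> Y, S - Y)) {S. S \<subseteq> A \<and> card (S \<inter> Y) \<le> J} ({U. U \<subseteq> Y \<and> card U \<le> J} \<times> Pow (A - Y))"
  proof (rule bij_betwI[where g = "\<lambda>(U,V). U \<union> V"])
    show "(\<lambda>S. (S \<inter> Y, S - Y)) \<in> {S. S \<subseteq> A \<and> card (S \<inter> Y) \<le> J} \<rightarrow> {U. U \<subseteq> Y \<and> card U \<le> J} \<times> Pow (A - Y)"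
      by auto
    show "(\<lambda>(U, V). U \<union> V) \<in> {U. U \<subseteq> Y \<and> card U \<le> J} \<times> Pow (A - Y) \<rightarrow> {S. S \<subseteq> A \<and> card (S \<inter> Y) \<le> J}"
    proof
      fix z assume z: "z \<in> {U. U \<subseteq> Y \<and> card U \<le> J} \<times> Pow (A - Y)"
      then obtain U V where uv: "z = (U,V)" "U \<subseteq> Y" "card U \<le> J" "V \<subseteq> A - Y" by auto
      have "(U \<union> V) \<inter> Y = U" using uv by auto
      then show "(\<lambda>(U, V). U \<union> V) z \<in> {S. S \<subseteq> A \<and> card (S \<inter> Y) \<le> J}" using uv assms by auto
    qed
  qed auto
  then have "card {S. S \<subseteq> A \<and> card (S \<inter> Y) \<le> J} = card ({U. U \<subseteq> Y \<and> card U \<le> J} \<times> Pow (A - Y))"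
    by (rule bij_betw_same_card)
  also have "\<dots> = card {U. U \<subseteq> Y \<and> card U \<le> J} * 2^(card A - card Y)"
    using assms by (simp add: card_cartesian_product card_Pow card_Diff_subset finite_subset)
  finally show ?thesis .
qed

lemma agent_univ: "(UNIV::agent set) = {BO,BN,SO,SN}"
  using agent.exhaust by auto

lemma finite_Pi_nmc: "finite (Pi_nmc n m c)"
proof -
  have "Pi_nmc n m c \<subseteq> {1..m+n+2*c} \<rightarrow>\<^sub>E UNIV" by (auto simp: Pi_nmc_def)
  moreover have "finite ({1..m+n+2*c} \<rightarrow>\<^sub>E (UNIV::agent set))"
    by (rule finite_PiE) (auto simp: agent_univ)
  ultimately show ?thesis by (rule finite_subset)
qed

lemma finite_E2: "finite (E2 n m c)"
  by (rule finite_subset[OF _ finite_Pi_nmc]) (auto simp: E2_def)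

definition tau :: "nat set \<Rightarrow> nat \<Rightarrow> nat \<Rightarrow> nat" where
  "tau S d i = (if i \<in> S then i + d else if d \<le> i \<and> i - d \<in> S then i - d else i)"

lemma tau_inv:
  assumes "\<And>a. a \<in> S \<Longrightarrow> a + d \<notin> S"
  shows "tau S d (tau S d i) = i"
  using assms unfolding tau_def by (auto split: if_splits)

lemma tau_fix:
  assumes "i \<notin> S" "i \<notin> (\<lambda>a. a + d) ` S"
  shows "tau S d i = i"
  using assms unfolding tau_def by (auto split: if_splits) (metis image_eqI le_add_diff_inverse2)

definition sdiff :: "nat set \<Rightarrow> nat set \<Rightarrow> nat set" where
  "sdiff S Z = (S - Z) \<union> (Z - S)"

lemma per_pi:
  fixes n m c p :: nat
  defines "N \<equiv> m + n + 2 * c" and "d \<equiv> n + c - 3*p + 1" and "A \<equiv> {2*p+1..n+c-p+1}"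
  assumes p2: "2 \<le> p" and p10: "10*p \<le> n+9" and nm: "n \<le> m" and c1: "1 \<le> c"
    and pi: "\<pi> \<in> Pi_nmc n m c"
  shows "p * card {S. S \<subseteq> A \<and> card {i\<in>{1..n+c-p+1}. \<pi> (tau S d i) \<in> {BO,BN}} \<le> p - 2} \<le> 2^d"
proof -
  define Bu where "Bu = {BO,BN}"
  define X where "X = {a\<in>A. \<pi> a \<in> Bu \<and> \<pi> (a+d) \<in> Bu}"
  define Z1 where "Z1 = {a\<in>A. \<pi> a \<in> Bu \<and> \<pi> (a+d) \<notin> Bu}"
  define Z2 where "Z2 = {a\<in>A. \<pi> a \<notin> Bu \<and> \<pi> (a+d) \<in> Bu}"
  define Y where "Y = Z1 \<union> Z2"
  define x where "x = card X"
  define k where "k = card Y"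
  have finA: "finite A" by (simp add: A_def)
  have cA: "card A = d" using p2 p10 by (simp add: A_def d_def)
  have fins: "finite X" "finite Z1" "finite Z2" "finite Y"
    using finA by (auto simp: X_def Z1_def Z2_def Y_def)
  have YA: "Y \<subseteq> A" "Z1 \<subseteq> A" by (auto simp: Y_def Z1_def Z2_def)
  have XY: "X \<inter> Y = {}" by (auto simp: X_def Y_def Z1_def Z2_def)
  have tauA: "tau S d a = (if a \<in> S then a + d else a)" if "S \<subseteq> A" "a \<in> A" for S a
  proof -
    have "\<not> (d \<le> a \<and> a - d \<in> S)"
    proof
      assume "d \<le> a \<and> a - d \<in> S"
      then have "a - d \<in> A" "a \<le> n+c-p+1" "d \<le> a" using that by (auto simp: A_def)
      then show False using p2 p10 unfolding A_def d_def by auto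
    qed
    then show ?thesis unfolding tau_def by auto
  qed
  have key: "x + card ((sdiff S Z1) \<inter> Y) \<le> card {i\<in>{1..n+c-p+1}. \<pi> (tau S d i) \<in> {BO,BN}}"
    if S: "S \<subseteq> A" for S
  proof -
    have eq: "{a\<in>A. \<pi> (tau S d a) \<in> Bu} = X \<union> ((sdiff S Z1) \<inter> Y)"
      using tauA[OF S] S by (auto simp: X_def Y_def Z1_def Z2_def sdiff_def split: if_splits)
    have "card {a\<in>A. \<pi> (tau S d a) \<in> Bu} = x + card ((sdiff S Z1) \<inter> Y)"
      unfolding eq x_def using XY fins by (subst card_Un_disjoint) auto
    moreover have "card {a\<in>A. \<pi> (tau S d a) \<in> Bu} \<le> card {i\<in>{1..n+c-p+1}. \<pi> (tau S d i) \<in> {BO,BN}}"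
      by (rule card_mono) (auto simp: A_def Bu_def)
    ultimately show ?thesis by simp
  qed
  have kb: "m + c + 2*d \<le> 2*x + k + N"
  proof -
    have p3: "3*p \<le> n + c" using p2 p10 by linarith
    have dd: "d + 3*p = n + c + 1" using p3 unfolding d_def by simp
    define A' where "A' = (\<lambda>a. a + d) ` A"
    have cA': "card A' = d" unfolding A'_def using cA by (simp add: card_image inj_on_def)
    have AA': "A \<inter> A' = {}" unfolding A'_def A_def using dd by auto
    have AN: "A \<union> A' \<subseteq> {1..N}" unfolding A'_def A_def N_def using dd nm p2 by auto
    have finA': "finite A'" unfolding A'_def using finA by simp
    have cAA: "card (A \<union> A') = 2*d" using card_Un_disjoint[OF finA finA' AA'] cA cA' by simp
    have cR: "card ({1..N} - (A \<union> A')) = N - 2*d"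
      using card_Diff_subset[OF _ AN] cAA finA finA' by simp
    have cards: "card {i\<in>{1..N}. \<pi> i = BO} = m" "card {i\<in>{1..N}. \<pi> i = BN} = c"
      using pi by (auto simp: Pi_nmc_def N_def)
    have cBu: "card {i\<in>{1..N}. \<pi> i \<in> Bu} = m + c"
      unfolding Bu_def using card_two[of BO BN N \<pi>] cards by simp
    have c1s: "card {a\<in>A. \<pi> a \<in> Bu} = x + card Z1"
    proof -
      have "{a\<in>A. \<pi> a \<in> Bu} = X \<union> Z1" by (auto simp: X_def Z1_def)
      moreover have "X \<inter> Z1 = {}" by (auto simp: X_def Z1_def)
      ultimately show ?thesis using fins x_def by (simp add: card_Un_disjoint)
    qed
    have c2s: "card ((\<lambda>a. a + d) ` {a\<in>A. \<pi> (a+d) \<in> Bu}) = x + card Z2"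
    proof -
      have "card ((\<lambda>a. a + d) ` {a\<in>A. \<pi> (a+d) \<in> Bu}) = card {a\<in>A. \<pi> (a+d) \<in> Bu}"
        by (simp add: card_image inj_on_def)
      moreover have "{a\<in>A. \<pi> (a+d) \<in> Bu} = X \<union> Z2" by (auto simp: X_def Z2_def)
      moreover have "X \<inter> Z2 = {}" by (auto simp: X_def Z2_def)
      ultimately show ?thesis using fins x_def by (simp add: card_Un_disjoint)
    qed
    have ck: "k = card Z1 + card Z2"
    proof -
      have "Z1 \<inter> Z2 = {}" by (auto simp: Z1_def Z2_def)
      then show ?thesis using fins k_def Y_def by (simp add: card_Un_disjoint)
    qed
    have sub: "{i\<in>{1..N}. \<pi> i \<in> Bu} \<subseteq> {a\<in>A. \<pi> a \<in> Bu} \<union> (\<lambda>a. a + d) ` {a\<in>A. \<pi> (a+d) \<in> Bu} \<union> ({1..N} - (A \<union> A'))"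
      unfolding A'_def by auto
    have "m + c \<le> card ({a\<in>A. \<pi> a \<in> Bu} \<union> (\<lambda>a. a + d) ` {a\<in>A. \<pi> (a+d) \<in> Bu} \<union> ({1..N} - (A \<union> A')))"
      using card_mono[OF _ sub] cBu finA by simp
    also have "\<dots> \<le> card {a\<in>A. \<pi> a \<in> Bu} + card ((\<lambda>a. a + d) ` {a\<in>A. \<pi> (a+d) \<in> Bu}) + card ({1..N} - (A \<union> A'))"
      by (meson card_Un_le add_le_mono order_trans le_refl)
    finally have "m + c \<le> x + card Z1 + (x + card Z2) + (N - 2 * d)" using c1s c2s cR by simp
    moreover have "2*d \<le> N" using card_mono[OF _ AN] cAA by simp
    ultimately show ?thesis using ck by linarith
  qed
  show ?thesis
  proof (cases "x \<le> p - 2")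
    case False
    have E: "{S. S \<subseteq> A \<and> card {i\<in>{1..n+c-p+1}. \<pi> (tau S d i) \<in> {BO,BN}} \<le> p - 2} = {}"
    proof (rule ccontr)
      assume "{S. S \<subseteq> A \<and> card {i\<in>{1..n+c-p+1}. \<pi> (tau S d i) \<in> {BO,BN}} \<le> p - 2} \<noteq> {}"
      then obtain S where "S \<subseteq> A" "card {i\<in>{1..n+c-p+1}. \<pi> (tau S d i) \<in> {BO,BN}} \<le> p - 2" by blast
      with key[of S] False show False by linarith
    qed
    show ?thesis unfolding E by simp
  next
    case True
    define J where "J = p - 2 - x"
    have pJ: "p = J + x + 2" using True p2 J_def by simp
    have sub: "{S. S \<subseteq> A \<and> card {i\<in>{1..n+c-p+1}. \<pi> (tau S d i) \<in> {BO,BN}} \<le> p - 2}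
        \<subseteq> {S. S \<subseteq> A \<and> card ((sdiff S Z1) \<inter> Y) \<le> J}"
    proof
      fix S assume "S \<in> {S. S \<subseteq> A \<and> card {i\<in>{1..n+c-p+1}. \<pi> (tau S d i) \<in> {BO,BN}} \<le> p - 2}"
      then have "S \<subseteq> A" "card {i\<in>{1..n+c-p+1}. \<pi> (tau S d i) \<in> {BO,BN}} \<le> p - 2" by auto
      with key[of S] J_def True show "S \<in> {S. S \<subseteq> A \<and> card ((sdiff S Z1) \<inter> Y) \<le> J}" by auto
    qed
    have "card {S. S \<subseteq> A \<and> card ((sdiff S Z1) \<inter> Y) \<le> J} \<le> card {S. S \<subseteq> A \<and> card (S \<inter> Y) \<le> J}"
    proof (rule card_inj_on_le[where f = "\<lambda>S. sdiff S Z1"])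
      show "inj_on (\<lambda>S. sdiff S Z1) {S. S \<subseteq> A \<and> card ((sdiff S Z1) \<inter> Y) \<le> J}"
        by (rule inj_onI) (auto simp: sdiff_def)
      show "(\<lambda>S. sdiff S Z1) ` {S. S \<subseteq> A \<and> card ((sdiff S Z1) \<inter> Y) \<le> J} \<subseteq> {S. S \<subseteq> A \<and> card (S \<inter> Y) \<le> J}"
        using YA by (auto simp: sdiff_def)
      show "finite {S. S \<subseteq> A \<and> card (S \<inter> Y) \<le> J}"
        by (rule finite_subset[of _ "Pow A"]) (use finA in auto)
    qed
    also have "\<dots> = (\<Sum>j\<le>J. k choose j) * 2^(d - k)"
      using card_subsets_inter[OF finA YA(1)] card_small_subsets[OF fins(4)] cA k_def by simp
    finally have c0: "card {S. S \<subseteq> A \<and> card ((sdiff S Z1) \<inter> Y) \<le> J} \<le> (\<Sum>j\<le>J. k choose j) * 2^(d - k)" .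
    have c1': "card {S. S \<subseteq> A \<and> card {i\<in>{1..n+c-p+1}. \<pi> (tau S d i) \<in> {BO,BN}} \<le> p - 2}
        \<le> (\<Sum>j\<le>J. k choose j) * 2^(d - k)"
    proof -
      have "finite {S. S \<subseteq> A \<and> card ((sdiff S Z1) \<inter> Y) \<le> J}"
        by (rule finite_subset[of _ "Pow A"]) (use finA in auto)
      from card_mono[OF this sub] show ?thesis using c0 by linarith
    qed
    have kd: "k \<le> d" using card_mono[OF finA YA(1)] cA k_def by simp
    have p3: "3*p \<le> n + c" using p2 p10 by linarith
    have dd: "d + 3*p = n + c + 1" using p3 unfolding d_def by simp
    have kJ: "4*J + 2*x + 2 \<le> k" using kb pJ p10 c1 dd unfolding N_def by linarith
    have "p * card {S. S \<subseteq> A \<and> card {i\<in>{1..n+c-p+1}. \<pi> (tau S d i) \<in> {BO,BN}} \<le> p - 2}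
        \<le> p * ((\<Sum>j\<le>J. k choose j) * 2^(d - k))" using c1' by simp
    also have "\<dots> = ((J+x+2) * (\<Sum>j\<le>J. k choose j)) * 2^(d - k)" using pJ by (simp only: mult.assoc)
    also have "\<dots> \<le> 2^k * 2^(d-k)" using binom_bound[OF kJ] by simp
    also have "\<dots> = 2^d" using kd by (simp add: power_add[symmetric])
    finally show ?thesis .
  qed
qed

lemma p_facts:
  fixes n :: nat
  assumes "20 \<le> n"
  shows "2 \<le> nat \<lceil>real n / 10\<rceil>" "10 * nat \<lceil>real n / 10\<rceil> \<le> n + 9"
proof -
  have a: "real n / 10 \<le> of_int \<lceil>real n / 10\<rceil>" by (rule le_of_int_ceiling)
  have b: "of_int \<lceil>real n / 10\<rceil> < real n / 10 + 1" using ceiling_correct[of "real n / 10"] by linarith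
  have c: "2 \<le> \<lceil>real n / 10\<rceil>" using a assms by (simp add: le_ceiling_iff)
  then show "2 \<le> nat \<lceil>real n / 10\<rceil>" by linarith
  have "10 * \<lceil>real n / 10\<rceil> < n + 10" using b by linarith
  then show "10 * nat \<lceil>real n / 10\<rceil> \<le> n + 9" using c by linarith
qed

lemma card_filter_sum: "finite A \<Longrightarrow> card {x\<in>A. P x} = (\<Sum>x\<in>A. of_bool (P x) :: nat)"
proof -
  assume f: "finite A"
  have "{x\<in>A. P x} = A \<inter> {x. P x}" by auto
  then show ?thesis using sum_of_bool_eq[of A P] f by simp
qed

lemma count_R:
  fixes n m c :: nat
  defines "N \<equiv> m + n + 2 * c" and "p \<equiv> nat \<lceil>real n / 10\<rceil>"
  assumes n20: "20 \<le> n" and nm: "n \<le> m" and c1: "1 \<le> c"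
  shows "p * card {\<pi>\<in>E2 n m c. card {i\<in>{1..n+c-p+1}. \<pi> i \<in> {BO,BN}} \<le> p - 2} \<le> card (E2 n m c)"
proof -
  have p2: "2 \<le> p" and p10: "10*p \<le> n + 9" using p_facts[OF n20] p_def by auto
  have p3: "3*p \<le> n + c" using p2 p10 by linarith
  define d where "d = n + c - 3*p + 1"
  define A where "A = {2*p+1..n+c-p+1}"
  have dd: "d + 3*p = n + c + 1" using p3 unfolding d_def by simp
  define Rp where "Rp = (\<lambda>\<pi>::nat \<Rightarrow> agent. card {i\<in>{1..n+c-p+1}. \<pi> i \<in> {BO,BN}} \<le> p - 2)"
  define R where "R = {\<pi>\<in>E2 n m c. Rp \<pi>}"
  define E where "E = E2 n m c"
  have finE: "finite E" unfolding E_def by (rule finite_E2)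
  have finA: "finite A" by (simp add: A_def)
  have cA: "card A = d" using p2 p10 by (simp add: A_def d_def)
  define M where "M = A \<union> (\<lambda>a. a + d) ` A"
  have M1: "M \<subseteq> {2*p+1..2*n+2*c}" unfolding M_def A_def using dd p2 p3 by auto
  have M2: "M \<subseteq> {..N - 2*p}" unfolding M_def A_def N_def using dd nm p2 p3 by auto
  have MN: "M \<subseteq> {1..N}" unfolding M_def A_def N_def using dd nm p2 p3 by auto
  have inv: "\<And>i. tau S d (tau S d i) = i" if "S \<subseteq> A" for S
  proof (rule tau_inv)
    fix a assume a: "a \<in> S"
    show "a + d \<notin> S"
    proof
      assume "a + d \<in> S"
      then have "a + d \<le> n + c - p + 1" "2*p+1 \<le> a" using a that unfolding A_def by auto
      then show False using dd p3 by linarith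
    qed
  qed
  have fx: "\<And>i. i \<notin> M \<Longrightarrow> tau S d i = i" if "S \<subseteq> A" for S
    using that by (intro tau_fix) (auto simp: M_def)
  have E2i: "\<pi> \<circ> tau S d \<in> E" if "S \<subseteq> A" "\<pi> \<in> E" for S \<pi>
  proof -
    have "\<pi> \<in> E2 n m c" using that(2) E_def by simp
    from E2_inv[where \<tau>="tau S d" and M=M and \<pi>=\<pi> and n=n and m=m and c=c, OF inv[OF that(1)] fx[OF that(1)]
      M1[unfolded p_def] M2[unfolded p_def N_def] MN[unfolded N_def] this]
    show ?thesis unfolding E_def .
  qed
  have inv2: "(\<pi> \<circ> tau S d) \<circ> tau S d = \<pi>" if "S \<subseteq> A" for S \<pi>
    using inv[OF that] by (simp add: comp_def)
  have eachS: "card {\<pi>\<in>E. Rp (\<pi> \<circ> tau S d)} = card R" if S: "S \<subseteq> A" for S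
  proof (rule bij_betw_same_card[of "\<lambda>\<pi>. \<pi> \<circ> tau S d"], rule bij_betwI[where g = "\<lambda>\<pi>. \<pi> \<circ> tau S d"])
    show "(\<lambda>\<pi>. \<pi> \<circ> tau S d) \<in> {\<pi> \<in> E. Rp (\<pi> \<circ> tau S d)} \<rightarrow> R"
      using E2i[OF S] unfolding R_def E_def by auto
    show "(\<lambda>\<pi>. \<pi> \<circ> tau S d) \<in> R \<rightarrow> {\<pi> \<in> E. Rp (\<pi> \<circ> tau S d)}"
      using E2i[OF S] unfolding R_def E_def by (auto simp: inv2[OF S])
    show "\<And>x. x \<in> {\<pi> \<in> E. Rp (\<pi> \<circ> tau S d)} \<Longrightarrow> x \<circ> tau S d \<circ> tau S d = x" by (rule inv2[OF S])
    show "\<And>y. y \<in> R \<Longrightarrow> y \<circ> tau S d \<circ> tau S d = y" by (rule inv2[OF S])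
  qed
  have per: "p * card {S. S \<subseteq> A \<and> Rp (\<pi> \<circ> tau S d)} \<le> 2^d" if "\<pi> \<in> E" for \<pi>
  proof -
    have "\<pi> \<in> Pi_nmc n m c" using that by (simp add: E_def E2_def)
    from per_pi[OF p2 p10 nm c1 this] show ?thesis unfolding Rp_def A_def d_def by simp
  qed
  have finPA: "finite (Pow A)" using finA by simp
  have "(\<Sum>S\<in>Pow A. card {\<pi>\<in>E. Rp (\<pi> \<circ> tau S d)}) = (\<Sum>S\<in>Pow A. \<Sum>\<pi>\<in>E. of_bool (Rp (\<pi> \<circ> tau S d)))"
    by (rule sum.cong[OF refl], rule card_filter_sum[OF finE])
  also have "\<dots> = (\<Sum>\<pi>\<in>E. \<Sum>S\<in>Pow A. of_bool (Rp (\<pi> \<circ> tau S d)))" by (rule sum.swap)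
  also have "\<dots> = (\<Sum>\<pi>\<in>E. card {S. S \<subseteq> A \<and> Rp (\<pi> \<circ> tau S d)})"
  proof (rule sum.cong[OF refl])
    fix \<pi> assume "\<pi> \<in> E"
    have "{S. S \<subseteq> A \<and> Rp (\<pi> \<circ> tau S d)} = {S\<in>Pow A. Rp (\<pi> \<circ> tau S d)}" by auto
    then show "(\<Sum>S\<in>Pow A. of_bool (Rp (\<pi> \<circ> tau S d))) = card {S. S \<subseteq> A \<and> Rp (\<pi> \<circ> tau S d)}"
      using card_filter_sum[OF finPA, of "\<lambda>S. Rp (\<pi> \<circ> tau S d)"] by simp
  qed
  finally have sw: "(\<Sum>S\<in>Pow A. card {\<pi>\<in>E. Rp (\<pi> \<circ> tau S d)}) = (\<Sum>\<pi>\<in>E. card {S. S \<subseteq> A \<and> Rp (\<pi> \<circ> tau S d)})" .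
  have "(\<Sum>S\<in>Pow A. card {\<pi>\<in>E. Rp (\<pi> \<circ> tau S d)}) = 2^d * card R"
    using eachS cA finA by (simp add: card_Pow)
  then have "p * (2^d * card R) = p * (\<Sum>\<pi>\<in>E. card {S. S \<subseteq> A \<and> Rp (\<pi> \<circ> tau S d)})"
    using sw by simp
  also have "\<dots> = (\<Sum>\<pi>\<in>E. p * card {S. S \<subseteq> A \<and> Rp (\<pi> \<circ> tau S d)})"
    by (rule sum_distrib_left)
  also have "\<dots> \<le> (\<Sum>\<pi>\<in>E. 2^d)" by (rule sum_mono) (use per in auto)
  also have "\<dots> = 2^d * card E" by simp
  finally have "2^d * (p * card R) \<le> 2^d * card E" by (simp add: mult_ac)
  then have "p * card R \<le> card E" by simp
  then show ?thesis unfolding R_def E_def Rp_def .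
qed

theorem lemma3p3:
  fixes FB FS :: "real measure" and n m c :: nat and q :: "nat \<Rightarrow> real"
  defines "b \<equiv> quantile FB" and "s \<equiv> quantile FS"
      and "N \<equiv> m + n + 2 * c" and "p \<equiv> nat \<lceil>real n / 10\<rceil>"
  assumes "real_distribution FB" and "real_distribution FS"
    and "\<And>u. 0 < u \<Longrightarrow> u < 1 \<Longrightarrow> b u \<ge> s u"
    and "20 \<le> n" and "n \<le> m" and "1 \<le> c"
    and "\<And>i. i \<in> {1..N} \<Longrightarrow> 0 < q i \<and> q i < 1"
    and "\<And>i j. i \<in> {1..N} \<Longrightarrow> j \<in> {1..N} \<Longrightarrow> i \<le> j \<Longrightarrow> q j \<le> q i"
    and "E2 n m c \<noteq> {}"
  shows "(\<Sum>\<pi>\<in>E2 n m c. OPT_fb b s q \<pi> N - STR_mech b s q \<pi> N) / real (card (E2 n m c))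
         \<le> (\<Sum>i\<in>{1..p}. \<Sum>j\<in>{N-p+1..N}. b (q i) - s (q j)) / (real p * real p)"
proof -
  note FB = assms(5) and FS = assms(6) and bs = assms(7) and n20 = assms(8) and nm = assms(9)
    and c1 = assms(10) and q01 = assms(11) and qmono = assms(12) and ne = assms(13)
  define bq where "bq = (\<lambda>i. b (q i))"
  define sq where "sq = (\<lambda>i. s (q i))"
  have ab: "\<And>i j. i \<in> {1..N} \<Longrightarrow> j \<in> {1..N} \<Longrightarrow> i \<le> j \<Longrightarrow> bq j \<le> bq i"
    unfolding bq_def b_def using quantile_mono[OF FB] q01 qmono by (meson)
  have as: "\<And>i j. i \<in> {1..N} \<Longrightarrow> j \<in> {1..N} \<Longrightarrow> i \<le> j \<Longrightarrow> sq j \<le> sq i"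
    unfolding sq_def s_def using quantile_mono[OF FS] q01 qmono by (meson)
  have dom: "\<And>i. i \<in> {1..N} \<Longrightarrow> sq i \<le> bq i"
    unfolding sq_def bq_def using bs q01 by blast
  have p2: "2 \<le> p" and p10: "10*p \<le> n + 9" using p_facts[OF n20] p_def by auto
  have p1: "1 \<le> p" using p2 by simp
  have pp: "2*p \<le> n + c + 1" using p2 p10 by linarith
  have pN: "p \<in> {1..N}" "N - p + 1 \<in> {1..N}" "N \<in> {1..N}" "p \<le> N - p + 1" "N-p+1 \<le> N"
    using p2 p10 nm unfolding N_def by auto
  define E where "E = E2 n m c"
  define Rp where "Rp = (\<lambda>\<pi>::nat \<Rightarrow> agent. card {i\<in>{1..n+c-p+1}. \<pi> i \<in> {BO,BN}} \<le> p - 2)"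
  define R where "R = {\<pi>\<in>E. Rp \<pi>}"
  define base where "base = bq p - sq (N-p+1)"
  define \<delta> where "\<delta> = sq (N-p+1) - sq N"
  have \<delta>0: "0 \<le> \<delta>" unfolding \<delta>_def using as[OF pN(2) pN(3) pN(5)] by simp
  have finE: "finite E" unfolding E_def by (rule finite_E2)
  have cE: "0 < card E" using finE ne E_def by (simp add: card_gt_0_iff)
  have cRn: "p * card R \<le> card E"
    using count_R[OF n20 nm c1] unfolding R_def E_def Rp_def p_def .
  have cR: "real p * real (card R) \<le> real (card E)"
    using cRn by (metis of_nat_le_iff of_nat_mult)
  have pw: "OPT_fb b s q \<pi> N - STR_mech b s q \<pi> N \<le> base + (if Rp \<pi> then \<delta> else 0)" if "\<pi> \<in> E" for \<pi>
  proof -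
    have "\<pi> \<in> Pi_nmc n m c" using that by (simp add: E_def E2_def)
    from pointwise[of N b q s, OF ab[unfolded bq_def] as[unfolded sq_def] dom[unfolded bq_def sq_def] this N_def[THEN meta_eq_to_obj_eq] p1 pp nm]
    show ?thesis using p2 unfolding base_def \<delta>_def Rp_def bq_def sq_def by simp
  qed
  have "(\<Sum>\<pi>\<in>E. OPT_fb b s q \<pi> N - STR_mech b s q \<pi> N) \<le> (\<Sum>\<pi>\<in>E. base + (if Rp \<pi> then \<delta> else 0))"
    by (rule sum_mono) (use pw in auto)
  also have "\<dots> = card E * base + card R * \<delta>"
  proof -
    have "E \<inter> Collect Rp = R" unfolding R_def by auto
    then show ?thesis using finE by (simp add: sum.distrib sum.If_cases)
  qed
  finally have L: "(\<Sum>\<pi>\<in>E. OPT_fb b s q \<pi> N - STR_mech b s q \<pi> N) / card E \<le> base + card R * \<delta> / card E"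
    using cE by (simp add: divide_simps mult.commute)
  have a: "card R * \<delta> / card E \<le> \<delta> / p"
  proof -
    have "real (card R) * \<delta> * real p \<le> \<delta> * real (card E)"
      using mult_right_mono[OF cR \<delta>0] by (simp add: mult_ac)
    then show ?thesis using cE p1 by (simp add: divide_simps)
  qed
  have RHS: "base + \<delta> / p \<le> (\<Sum>i\<in>{1..p}. \<Sum>j\<in>{N-p+1..N}. b (q i) - s (q j)) / (real p * real p)"
  proof -
    define J1 where "J1 = {N-p+1..N}"
    have cJ: "card J1 = p" unfolding J1_def using pN by simp
    have NJ: "N \<in> J1" unfolding J1_def using pN by simp
    have finJ: "finite J1" unfolding J1_def by simp
    have cJ': "card (J1 - {N}) = p - 1" using cJ NJ finJ by simp
    have sj: "(\<Sum>j\<in>J1. sq j) \<le> (real p - 1) * sq (N-p+1) + sq N"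
    proof -
      have "(\<Sum>j\<in>J1. sq j) = sq N + (\<Sum>j\<in>J1 - {N}. sq j)" using sum.remove[OF finJ NJ] by simp
      also have "(\<Sum>j\<in>J1 - {N}. sq j) \<le> (\<Sum>j\<in>J1 - {N}. sq (N-p+1))"
      proof (rule sum_mono)
        fix j assume "j \<in> J1 - {N}"
        then have "j \<in> {1..N}" "N-p+1 \<le> j" unfolding J1_def using pN by auto
        then show "sq j \<le> sq (N-p+1)" using as[OF pN(2)] by simp
      qed
      also have "\<dots> = (real p - 1) * sq (N-p+1)" using cJ' p1 by (simp add: of_nat_diff)
      finally show ?thesis by simp
    qed
    have "(\<Sum>i\<in>{1..p}. \<Sum>j\<in>J1. bq p - sq j) \<le> (\<Sum>i\<in>{1..p}. \<Sum>j\<in>J1. bq i - sq j)"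
    proof (intro sum_mono)
      fix i j assume "i \<in> {1..p}"
      then have "i \<in> {1..N}" "i \<le> p" using pN by auto
      then show "bq p - sq j \<le> bq i - sq j" using ab[OF _ pN(1)] by simp
    qed
    moreover have "(\<Sum>i\<in>{1..p}. \<Sum>j\<in>J1. bq p - sq j) = real p * (real p * bq p - (\<Sum>j\<in>J1. sq j))"
      using cJ by (simp add: sum_subtractf)
    moreover have "real p * (real p * bq p - (\<Sum>j\<in>J1. sq j)) \<ge> real p * (real p * bq p - ((real p - 1) * sq (N-p+1) + sq N))"
      using sj p1 by (intro mult_left_mono) auto
    ultimately have T: "real p * (real p * bq p - ((real p - 1) * sq (N-p+1) + sq N)) \<le> (\<Sum>i\<in>{1..p}. \<Sum>j\<in>J1. bq i - sq j)"
      by linarith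
    have "base + \<delta> / p = (real p * (real p * bq p - ((real p - 1) * sq (N-p+1) + sq N))) / (real p * real p)"
      using p1 unfolding base_def \<delta>_def by (simp add: field_simps)
    also have "\<dots> \<le> (\<Sum>i\<in>{1..p}. \<Sum>j\<in>J1. bq i - sq j) / (real p * real p)"
      using T p1 by (intro divide_right_mono) auto
    finally show ?thesis unfolding J1_def bq_def sq_def .
  qed
  show ?thesis using L a RHS unfolding E_def by linarith
qed

end
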